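(* Let $(V,\omega)$ be a finite-dimensional super vector space over $\mathbb{Q}$ with an odd constant symplectic form. Then \[ \Lambda_{\gamma,\nu}[V]:=(\mathbb{Q}_+[\gamma,\nu]\otimes V^* )\oplus(\mathbb{Q}[\gamma,\nu]\otimes\mathfrak{h}_{\geq 2})\oplus\Big(\mathbb{Q}[\gamma,\nu]\otimes\bigoplus_{i=2}^\infty \big[(\mathfrak{h}_{\geq 1})^{\otimes i}\big]_{S_i}\Big) \] is a differential graded Lie subalgebra of $\mathfrak{l}'$; in particular it is a differential graded Lie algebra with the differential induced by $d=\gamma\cdot\delta+\Delta$.
   Context: Work over $\mathbb{Q}$ with super vector spaces. $\mathfrak{h}=\mathfrak{h}[V]=\mathrm{DR}^0(V)=\bigoplus_{i\ge0}((V^* )^{\otimes i})_{\mathbb{Z}/i}$ is the space of noncommutative $0$-forms (cyclic words in $V^*$) with its odd bracket $\{-,-\}$ and odd cobracket $\Delta$ (given, in coordinates $x_1..x_n$ even, $\xi_1..\xi_n$ odd with $\omega=\sum dx_id\xi_i$ and $\langle x_i,\xi_j\rangle^{-1}=\langle\xi_j,x_i\rangle^{-1}=\delta_{ij}$, by: $\{a_1\cdots a_n,b_1\cdots b_m\}=\sum_{i,j}\pm\langle a_i,b_j\rangle^{-1}(z_{n-1}^{i-1}[a_1\cdots\widehat{a_i}\cdots a_n])(z_{m-1}^{j-1}[b_1\cdots\widehat{b_j}\cdots b_m])$, $z_k=(k\;k-1\cdots1)$, and $\Delta(a_1\cdots a_n)=\frac12\sum_{i<j}\pm\langle a_i,a_j\rangle^{-1}[1+(1\,2)][(a_{i+1}\cdots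 a_{j-1})\otimes(a_{j+1}\cdots a_na_1\cdots a_{i-1})]$, with Koszul signs). $\mathfrak{l}:=\mathbb{Q}[\gamma]\otimes S(\mathfrak{h})$ is the differential graded Lie algebra with the odd bracket obtained by extending $\{-,-\}$ to the symmetric algebra $S(\mathfrak{h})$ by the Leibniz rule (and $\mathbb{Q}[\gamma]$-linearly), and differential $d=\gamma\delta+\Delta$, where $\delta$ is the Chevalley–Eilenberg differential $\delta(g_1\cdots g_n)=\sum_{i<j}\pm\{g_i,g_j\}g_1\cdots\widehat{g_i}\cdots\widehat{g_j}\cdots g_n$ and $\Delta$ is the cobracket extended to $S(\mathfrak{h})$ as a derivation of the product. Notation: $\mathfrak{h}_{\ge n}:=\bigoplus_{i\ge n}((V^* )^{\otimes i})_{\mathbb{Z}/i}$, so $\mathfrak{h}=\mathbb{Q}\oplus\mathfrak{h}_{\ge1}$ and $\mathfrak{h}_{\ge1}=V^*\oplus\mathfrak{h}_{\ge2}$. Identifying $S(\mathbb{Q})$ with $\mathbb{Q}[\nu]$ (where $\nu$ is the constant $0$-form $1\in\mathfrak{h}$), $\mathfrak{l}=\mathbb{Q}[\gamma,\nu]\otimes S(\mathfrak{h}_{\ge1})$; the bracket and differential are $\mathbb{Q}[\gamma,\nu]$-linear. The summand $\mathbb{Q}[\gamma,\nu]=\mathbb{Q}[\gamma,\nu]\otimes S^0(\mathfrak{h}_{\ge1})$ is an ideal with trivial bracket, and $\mathfrak{l}':=\mathbb{Q}[\gamma,\nu]\otimes\bigoplus_{i\ge1}[(\mathfrak{h}_{\ge1})^{\otimes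 i}]_{S_i}$ is the quotient differential graded Lie algebra. $\mathbb{Q}_+[\gamma,\nu]$ is the ideal of polynomials vanishing at the origin. *)

theory Defs
  imports Complex_Main "HOL-Library.Poly_Mapping"
begin

text \<open>Darboux coordinates of V^* : x_i even (X i), xi_i odd (Xi i), i < n,
  with omega = sum dx_i dxi_i.\<close>

datatype letter = X nat | Xi nat

fun lidx :: "letter \<Rightarrow> nat" where
  "lidx (X i) = i" | "lidx (Xi i) = i"

fun lp :: "letter \<Rightarrow> bool" \<comment> \<open>parity: True = odd\<close> where
  "lp (X i) = False" | "lp (Xi i) = True"

fun pinv :: "letter \<Rightarrow> letter \<Rightarrow> rat" where
  "pinv (X i) (Xi j) = (if i = j then 1 else 0)"
| "pinv (Xi i) (X j) = (if i = j then 1 else 0)"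
| "pinv _ _ = 0"

type_synonym word = "letter list"

definition wp :: "word \<Rightarrow> bool" where
  "wp w = odd (length (filter lp w))"

text \<open>Koszul sign of rearranging a graded sequence with parities ps into the
  sequence whose k-th entry is the (pi ! k)-th entry of the original one.\<close>
definition koszul :: "bool list \<Rightarrow> nat list \<Rightarrow> rat" where
  "koszul ps \<pi> = (-1) ^ card {(a, b). a < b \<and> b < length \<pi> \<and> \<pi> ! b < \<pi> ! a
                                 \<and> ps ! (\<pi> ! a) \<and> ps ! (\<pi> ! b)}"

definition smul :: "rat \<Rightarrow> ('a \<Rightarrow>\<^sub>0 rat) \<Rightarrow> ('a \<Rightarrow>\<^sub>0 rat)" where
  "smul c x = Poly_Mapping.map (\<lambda>v. c * v) x"

definition lin :: "('a \<Rightarrow> ('b \<Rightarrow>\<^sub>0 rat)) \<Rightarrow> ('a \<Rightarrow>\<^sub>0 rat) \<Rightarrow> ('b \<Rightarrow>\<^sub>0 rat)" where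
  "lin f x = (\<Sum>k\<in>Poly_Mapping.keys x. smul (Poly_Mapping.lookup x k) (f k))"

definition lin2 :: "('a \<Rightarrow> 'b \<Rightarrow> ('c \<Rightarrow>\<^sub>0 rat)) \<Rightarrow> ('a \<Rightarrow>\<^sub>0 rat) \<Rightarrow> ('b \<Rightarrow>\<^sub>0 rat)
                     \<Rightarrow> ('c \<Rightarrow>\<^sub>0 rat)" where
  "lin2 f x y = (\<Sum>k\<in>Poly_Mapping.keys x. \<Sum>k'\<in>Poly_Mapping.keys y. smul (Poly_Mapping.lookup x k * Poly_Mapping.lookup y k') (f k k'))"

definition rm_idx :: "nat set \<Rightarrow> 'a list \<Rightarrow> 'a list" where
  "rm_idx S xs = map ((!) xs) (filter (\<lambda>t. t \<notin> S) [0..<length xs])"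

section \<open>Symmetrisation: h = cyclic coinvariants, S(h) = symmetric coinvariants\<close>

text \<open>Over Q, coinvariants are identified with invariants via the averaging
  projections below.  Raw monomials of l = Q[gamma] (x) S(h) are pairs
  (gamma-exponent, list of words); the empty word is the constant 0-form nu = 1.\<close>

definition symC :: "word \<Rightarrow> (word \<Rightarrow>\<^sub>0 rat)" where
  "symC w = (if w = [] then Poly_Mapping.single [] 1 else
     smul (1 / of_nat (length w))
       (\<Sum>k<length w. Poly_Mapping.single (rotate k w)
                         (koszul (map lp w) (rotate k [0..<length w]))))"

fun cycAll :: "word list \<Rightarrow> (word list \<Rightarrow>\<^sub>0 rat)" where
  "cycAll [] = Poly_Mapping.single [] 1"
| "cycAll (w # ws) = lin2 (\<lambda>u us. Poly_Mapping.single (u # us) 1) (symC w) (cycAll ws)"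

definition symS :: "word list \<Rightarrow> (word list \<Rightarrow>\<^sub>0 rat)" where
  "symS ws = smul (1 / of_nat (fact (length ws)))
     (\<Sum>\<pi>\<in>{\<pi>. distinct \<pi> \<and> set \<pi> = {0..<length ws}}.
        Poly_Mapping.single (map ((!) ws) \<pi>) (koszul (map wp ws) \<pi>))"

type_synonym mono = "nat \<times> word list"

fun symM :: "mono \<Rightarrow> (mono \<Rightarrow>\<^sub>0 rat)" where
  "symM (a, ws) = lin (\<lambda>us. Poly_Mapping.single (a, us) 1) (lin symS (cycAll ws))"

definition Sym :: "(mono \<Rightarrow>\<^sub>0 rat) \<Rightarrow> (mono \<Rightarrow>\<^sub>0 rat)" where
  "Sym x = lin symM x"

definition brw :: "word \<Rightarrow> word \<Rightarrow> (word \<Rightarrow>\<^sub>0 rat)" where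
  "brw a b = (let n = length a; m = length b in
     \<Sum>i<n. \<Sum>j<m.
       Poly_Mapping.single (drop (Suc i) a @ take i a @ drop (Suc j) b @ take j b)
         (koszul (map lp (a @ b))
            ([i, n + j] @ [Suc i..<n] @ [0..<i] @ map ((+) n) ([Suc j..<m] @ [0..<j]))
          * pinv (a ! i) (b ! j)))"

text \<open>Cobracket h -> S^2 h: the factor 1/2 [1 + (1 2)] is the symmetrisation
  of the two-factor tensor, performed by Sym at the end.\<close>
definition cobw :: "word \<Rightarrow> (word list \<Rightarrow>\<^sub>0 rat)" where
  "cobw w = (let n = length w in
     \<Sum>j<n. \<Sum>i<j.
       Poly_Mapping.single [take (j - Suc i) (drop (Suc i) w), drop (Suc j) w @ take i w]
         (koszul (map lp w) ([i, j] @ [Suc i..<j] @ [Suc j..<n] @ [0..<i])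
          * pinv (w ! i) (w ! j)))"

text \<open>Leibniz extension of the odd bracket (the odd bracket symbol is treated as an
  odd element for the Koszul sign).\<close>
fun brm :: "mono \<Rightarrow> mono \<Rightarrow> (mono \<Rightarrow>\<^sub>0 rat)" where
  "brm (a, gs) (b, hs) = (let k = length gs; l = length hs in
     \<Sum>i<k. \<Sum>j<l.
       lin (\<lambda>u. Poly_Mapping.single (a + b, u # rm_idx {i} gs @ rm_idx {j} hs)
              (koszul (map wp gs @ [True] @ map wp hs)
                 ([i, k, Suc (k + j)] @ rm_idx {i} [0..<k] @ map (\<lambda>t. Suc (k + t)) (rm_idx {j} [0..<l]))))
           (brw (gs ! i) (hs ! j)))"

text \<open>Chevalley--Eilenberg differential (times gamma).\<close>
fun deltam :: "mono \<Rightarrow> (mono \<Rightarrow>\<^sub>0 rat)" where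
  "deltam (a, gs) = (let k = length gs in
     \<Sum>j<k. \<Sum>i<j.
       lin (\<lambda>u. Poly_Mapping.single (Suc a, u # rm_idx {i, j} gs)
              (koszul (True # map wp gs)
                 ([Suc i, 0, Suc j] @ map Suc (rm_idx {i, j} [0..<k]))))
           (brw (gs ! i) (gs ! j)))"

text \<open>Cobracket extended as a derivation.\<close>
fun cobm :: "mono \<Rightarrow> (mono \<Rightarrow>\<^sub>0 rat)" where
  "cobm (a, gs) = (let k = length gs in
     \<Sum>i<k.
       lin (\<lambda>us. Poly_Mapping.single (a, us @ rm_idx {i} gs)
               (koszul (map wp gs) (i # rm_idx {i} [0..<k])))
           (cobw (gs ! i)))"

definition brl :: "(mono \<Rightarrow>\<^sub>0 rat) \<Rightarrow> (mono \<Rightarrow>\<^sub>0 rat) \<Rightarrow> (mono \<Rightarrow>\<^sub>0 rat)" where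
  "brl x y = Sym (lin2 brm x y)"

definition dl :: "(mono \<Rightarrow>\<^sub>0 rat) \<Rightarrow> (mono \<Rightarrow>\<^sub>0 rat)" where
  "dl x = Sym (lin (\<lambda>m. deltam m + cobm m) x)"

definition inL :: "nat \<Rightarrow> (mono \<Rightarrow>\<^sub>0 rat) \<Rightarrow> bool" where
  "inL n x \<longleftrightarrow> Sym x = x \<and>
     (\<forall>(a, ws)\<in>Poly_Mapping.keys x. \<forall>w\<in>set ws. \<forall>c\<in>set w. lidx c < n)"

text \<open>l' = l / Q[gamma,nu] is identified with the complementary span of monomials
  having at least one nonempty word; prjL is the quotient map.\<close>
definition prjL :: "(mono \<Rightarrow>\<^sub>0 rat) \<Rightarrow> (mono \<Rightarrow>\<^sub>0 rat)" where
  "prjL x = lin (\<lambda>(a, ws). if \<exists>w\<in>set ws. w \<noteq> [] then Poly_Mapping.single (a, ws) 1 else 0) x"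

text \<open>Monomial gamma^a nu^b g_1...g_m (g_i nonempty words) lies in Lambda iff
  m = 1, |g_1| = 1, a + b >= 1; or m = 1, |g_1| >= 2; or m >= 2.\<close>
definition allowedM :: "mono \<Rightarrow> bool" where
  "allowedM m = (case m of (a, ws) \<Rightarrow>
     (let ne = filter (\<lambda>w. w \<noteq> []) ws; b = length ws - length ne in
       (length ne = 1 \<and> (2 \<le> length (hd ne) \<or> 1 \<le> a + b)) \<or> 2 \<le> length ne))"

definition Lam :: "nat \<Rightarrow> (mono \<Rightarrow>\<^sub>0 rat) \<Rightarrow> bool" where
  "Lam n x \<longleftrightarrow> inL n x \<and> (\<forall>m\<in>Poly_Mapping.keys x. allowedM m)"

end

theory Submission
  imports Defs "HOL-Library.Multiset" "HOL-Combinatorics.Multiset_Permutations" "HOL-Number_Theory.Cong"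
begin

lemma lookup_smul [simp]: "Poly_Mapping.lookup (smul c x) k = c * Poly_Mapping.lookup x k"
  by (simp add: smul_def map.rep_eq when_def)

lemma smul_add: "smul c (x + y) = smul c x + smul c y"
  by (rule poly_mapping_eqI) (simp add: lookup_add algebra_simps)

lemma smul_add2: "smul (c + d) x = smul c x + smul d x"
  by (rule poly_mapping_eqI) (simp add: lookup_add algebra_simps)

lemma smul_sum: "smul c (sum f A) = (\<Sum>a\<in>A. smul c (f a))"
  by (rule poly_mapping_eqI) (simp add: lookup_sum sum_distrib_left)

lemma smul_sum2: "smul (sum f A) x = (\<Sum>a\<in>A. smul (f a) x)"
  by (rule poly_mapping_eqI) (simp add: lookup_sum sum_distrib_right)

lemma smul_smul [simp]: "smul c (smul d x) = smul (c * d) x"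
  by (rule poly_mapping_eqI) simp

lemma smul_1 [simp]: "smul 1 x = x"
  by (rule poly_mapping_eqI) simp

lemma smul_0 [simp]: "smul 0 x = 0"
  by (rule poly_mapping_eqI) simp

lemma smul_zero [simp]: "smul c 0 = 0"
  by (rule poly_mapping_eqI) simp

lemma smul_single [simp]: "smul c (Poly_Mapping.single k d) = Poly_Mapping.single k (c * d)"
  by (rule poly_mapping_eqI) (simp add: lookup_single when_def)

lemma keys_smul: "Poly_Mapping.keys (smul c x) \<subseteq> Poly_Mapping.keys x"
  by (auto simp: in_keys_iff)

lemma lin_alt:
  assumes "finite K" "Poly_Mapping.keys x \<subseteq> K"
  shows "lin f x = (\<Sum>k\<in>K. smul (Poly_Mapping.lookup x k) (f k))"
  unfolding lin_def
  by (rule sum.mono_neutral_left) (use assms in \<open>auto simp: in_keys_iff\<close>)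

lemma lin_add: "lin f (x + y) = lin f x + lin f y"
proof -
  let ?K = "Poly_Mapping.keys x \<union> Poly_Mapping.keys y"
  have "lin f (x + y) = (\<Sum>k\<in>?K. smul (Poly_Mapping.lookup (x+y) k) (f k))"
    using keys_add[of x y] by (intro lin_alt) auto
  also have "\<dots> = (\<Sum>k\<in>?K. smul (Poly_Mapping.lookup x k) (f k)) + (\<Sum>k\<in>?K. smul (Poly_Mapping.lookup y k) (f k))"
    by (simp add: lookup_add smul_add2 sum.distrib)
  also have "\<dots> = lin f x + lin f y"
    by (subst (1 2) lin_alt[of ?K]) auto
  finally show ?thesis .
qed

lemma lin_zero [simp]: "lin f 0 = 0"
  by (simp add: lin_def)

lemma lin_single [simp]: "lin f (Poly_Mapping.single k c) = smul c (f k)"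
  by (subst lin_alt[of "{k}"]) auto

lemma lin_smul: "lin f (smul c x) = smul c (lin f x)"
  by (subst (1 2) lin_alt[of "Poly_Mapping.keys x"]) (auto simp: keys_smul smul_sum)

lemma lin_sum: "lin f (sum g A) = (\<Sum>a\<in>A. lin f (g a))"
  by (induction A rule: infinite_finite_induct) (auto simp: lin_add)

lemma lookup_lin: "Poly_Mapping.lookup (lin f x) m = (\<Sum>k\<in>Poly_Mapping.keys x. Poly_Mapping.lookup x k * Poly_Mapping.lookup (f k) m)"
  by (simp add: lin_def lookup_sum)

lemma keys_lin: "Poly_Mapping.keys (lin f x) \<subseteq> (\<Union>k\<in>Poly_Mapping.keys x. Poly_Mapping.keys (f k))"
  unfolding lin_def using keys_sum keys_smul by fastforce

lemma lin_lin: "lin f (lin g x) = lin (\<lambda>k. lin f (g k)) x"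
  by (simp add: lin_def[of g] lin_sum lin_smul) (simp add: lin_def)

lemma lin2_eq: "lin2 f x y = lin (\<lambda>k. lin (f k) y) x"
  by (simp add: lin2_def lin_def smul_sum)

lemma lin_cong: "(\<And>k. k \<in> Poly_Mapping.keys x \<Longrightarrow> f k = g k) \<Longrightarrow> lin f x = lin g x"
  by (simp add: lin_def)

lemma avg_idem:
  fixes G :: "'k \<Rightarrow> 'g set" and act :: "'g \<Rightarrow> 'k \<Rightarrow> 'k" and sg :: "'g \<Rightarrow> 'k \<Rightarrow> rat"
    and P :: "'k \<Rightarrow> ('k \<Rightarrow>\<^sub>0 rat)"
  assumes P: "\<And>k. P k = smul (1 / of_nat (card (G k))) (\<Sum>g\<in>G k. Poly_Mapping.single (act g k) (sg g k))"
    and fin: "\<And>k. finite (G k)" and ne: "\<And>k. G k \<noteq> {}"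
    and comp: "\<And>k g. g \<in> G k \<Longrightarrow> \<exists>\<phi>. bij_betw \<phi> (G (act g k)) (G k) \<and>
        (\<forall>h\<in>G (act g k). act (\<phi> h) k = act h (act g k) \<and> sg (\<phi> h) k = sg h (act g k) * sg g k)"
    and sq: "\<And>k g. g \<in> G k \<Longrightarrow> sg g k * sg g k = 1"
  shows "lin P (P k) = P k"
proof -
  have eq: "P (act g k) = smul (sg g k) (P k)" if g: "g \<in> G k" for g
  proof -
    obtain \<phi> where bij: "bij_betw \<phi> (G (act g k)) (G k)"
      and h: "\<And>h. h\<in>G (act g k) \<Longrightarrow> act (\<phi> h) k = act h (act g k) \<and> sg (\<phi> h) k = sg h (act g k) * sg g k"
      using comp[OF g] by blast
    have card: "card (G (act g k)) = card (G k)" using bij by (rule bij_betw_same_card)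
    have "(\<Sum>h\<in>G (act g k). Poly_Mapping.single (act h (act g k)) (sg h (act g k)))
        = (\<Sum>h\<in>G (act g k). Poly_Mapping.single (act (\<phi> h) k) (sg (\<phi> h) k * sg g k))"
    proof (rule sum.cong[OF refl])
      fix h assume hh: "h \<in> G (act g k)"
      have "sg (\<phi> h) k * sg g k = sg h (act g k) * (sg g k * sg g k)" using h[OF hh] by simp
      also have "\<dots> = sg h (act g k)" using sq[OF g] by simp
      finally have "sg (\<phi> h) k * sg g k = sg h (act g k)" .
      then show "Poly_Mapping.single (act h (act g k)) (sg h (act g k))
        = Poly_Mapping.single (act (\<phi> h) k) (sg (\<phi> h) k * sg g k)" using conjunct1[OF h[OF hh]] by simp
    qed
    also have "\<dots> = (\<Sum>h'\<in>G k. Poly_Mapping.single (act h' k) (sg h' k * sg g k))"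
      by (rule sum.reindex_bij_betw[OF bij])
    also have "\<dots> = smul (sg g k) (\<Sum>h'\<in>G k. Poly_Mapping.single (act h' k) (sg h' k))"
      by (simp add: smul_sum mult.commute)
    finally show ?thesis by (simp add: P[of "act g k"] P[of k] card mult.commute)
  qed
  have "lin P (P k) = lin P (smul (1 / of_nat (card (G k))) (\<Sum>g\<in>G k. Poly_Mapping.single (act g k) (sg g k)))"
    by (simp only: P[of k])
  also have "\<dots> = smul (1 / of_nat (card (G k))) (\<Sum>g\<in>G k. smul (sg g k) (P (act g k)))"
    by (simp add: lin_smul lin_sum)
  also have "\<dots> = smul (1 / of_nat (card (G k))) (\<Sum>g\<in>G k. P k)"
    by (rule arg_cong[where f="smul _"], rule sum.cong) (auto simp: eq sq)
  also have "\<dots> = P k"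
    using fin[of k] ne[of k] by (simp add: card_gt_0_iff smul_sum2[symmetric, of "\<lambda>_. 1", simplified])
  finally show ?thesis .
qed

definition INV :: "nat \<Rightarrow> (nat \<Rightarrow> nat) \<Rightarrow> (nat \<Rightarrow> bool) \<Rightarrow> (nat \<times> nat) set" where
  "INV n f q = {(a, b). a < b \<and> b < n \<and> f b < f a \<and> q (f a) \<and> q (f b)}"

lemma finite_INV [simp]: "finite (INV n f q)"
proof -
  have "INV n f q \<subseteq> {..<n} \<times> {..<n}" by (auto simp: INV_def)
  then show ?thesis by (rule finite_subset) auto
qed

lemma koszul_INV: "koszul ps \<pi> = (-1) ^ card (INV (length \<pi>) ((!) \<pi>) ((!) ps))"
  by (simp add: koszul_def INV_def)

lemma INV_cong:
  assumes "\<And>a. a < n \<Longrightarrow> f a = f' a" "\<And>a. a < n \<Longrightarrow> q (f a) = q' (f a)"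
  shows "INV n f q = INV n f' q'"
  using assms unfolding INV_def by (auto; metis order.strict_trans)

lemma INV_parity:
  assumes g: "bij_betw g {..<n} {..<n}" and f: "inj_on f {..<n}"
  shows "even (card (INV n (f \<circ> g) q) + card (INV n g (q \<circ> f)) + card (INV n f q))"
proof -
  define A where "A = INV n (f \<circ> g) q"
  define B where "B = INV n g (q \<circ> f)"
  define C where "C = INV n f q"
  define J where "J = {(a, b). a < b \<and> b < n \<and> q (f (g a)) \<and> q (f (g b)) \<and>
     ((g a < g b \<and> f (g b) < f (g a)) \<or> (g b < g a \<and> f (g a) < f (g b)))}"
  have gin: "g a < n" if "a < n" for a using g that by (auto simp: bij_betw_def)
  have ginj: "g a = g b \<Longrightarrow> a < n \<Longrightarrow> b < n \<Longrightarrow> a = b" for a b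
    using g by (auto simp: bij_betw_def inj_on_def)
  have finj: "f c = f d \<Longrightarrow> c < n \<Longrightarrow> d < n \<Longrightarrow> c = d" for c d
    using f by (auto simp: inj_on_def)
  have finJ: "finite J"
  proof -
    have "J \<subseteq> {..<n} \<times> {..<n}" by (auto simp: J_def)
    then show ?thesis by (rule finite_subset) auto
  qed
  have AJ: "A = (B - J) \<union> (J - B)"
  proof (intro set_eqI iffI)
    fix x assume "x \<in> A"
    then obtain a b where x: "x = (a, b)" "a < b" "b < n" "f (g b) < f (g a)" "q (f (g a))" "q (f (g b))"
      by (auto simp: A_def INV_def)
    then have "g a \<noteq> g b" using ginj by force
    then show "x \<in> (B - J) \<union> (J - B)" using x by (auto simp: B_def J_def INV_def)
  next
    fix x assume "x \<in> (B - J) \<union> (J - B)"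
    then obtain a b where x: "x = (a, b)" "a < b" "b < n" "q (f (g a))" "q (f (g b))"
      by (auto simp: B_def J_def INV_def)
    have ne: "g a \<noteq> g b" using ginj x by force
    have ne2: "f (g a) \<noteq> f (g b)" using finj[of "g a" "g b"] ne gin x by force
    show "x \<in> A" using \<open>x \<in> (B - J) \<union> (J - B)\<close> x ne ne2
      by (auto simp: A_def B_def J_def INV_def)
  qed
  have cA: "card A + 2 * card (B \<inter> J) = card B + card J"
  proof -
    have "card A = card (B - J) + card (J - B)"
      unfolding AJ by (rule card_Un_disjoint) (auto simp: finJ B_def)
    moreover have "card B = card (B - J) + card (B \<inter> J)"
    proof -
      have "B = (B - J) \<union> (B \<inter> J)" by blast
      then have "card B = card ((B - J) \<union> (B \<inter> J))" by simp
      also have "\<dots> = card (B - J) + card (B \<inter> J)"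
        by (rule card_Un_disjoint) (auto simp: B_def)
      finally show ?thesis .
    qed
    moreover have "card J = card (J - B) + card (B \<inter> J)"
    proof -
      have "J = (J - B) \<union> (B \<inter> J)" by blast
      then have "card J = card ((J - B) \<union> (B \<inter> J))" by simp
      also have "\<dots> = card (J - B) + card (B \<inter> J)"
        by (rule card_Un_disjoint) (auto simp: finJ)
      finally show ?thesis .
    qed
    ultimately show ?thesis by simp
  qed
  have cJ: "card J = card C"
  proof -
    define gi where "gi = inv_into {..<n} g"
    have gi: "c < n \<Longrightarrow> gi c < n \<and> g (gi c) = c" for c
      using g unfolding gi_def
      by (metis bij_betw_def bij_betw_inv_into_right inv_into_into lessThan_iff)
    have gig: "a < n \<Longrightarrow> gi (g a) = a" for a
      using g unfolding gi_def by (simp add: bij_betw_def inv_into_f_f)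
    define h where "h = (\<lambda>(a::nat, b::nat). (min (g a) (g b), max (g a) (g b)))"
    have "bij_betw h J C"
    proof (rule bij_betw_imageI)
      show "inj_on h J"
      proof (rule inj_onI)
        fix x y assume "x \<in> J" "y \<in> J" "h x = h y"
        then obtain a b a' b' where xy: "x = (a,b)" "y = (a',b')" "a < b" "b < n" "a' < b'" "b' < n"
          by (auto simp: J_def)
        then have "a < n" "a' < n" by auto
        with xy \<open>h x = h y\<close> show "x = y"
          unfolding h_def min_def max_def
          by (auto split: if_splits dest!: ginj)
      qed
    next
      show "h ` J = C"
      proof (intro set_eqI iffI)
        fix x assume "x \<in> h ` J"
        then obtain a b where ab: "(a,b) \<in> J" "x = h (a,b)" by auto
        then have "a < n" "b < n" by (auto simp: J_def)
        then show "x \<in> C" using ab gin[of a] gin[of b]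
          by (auto simp: J_def C_def INV_def h_def min_def max_def)
      next
        fix x assume "x \<in> C"
        then obtain c d where cd: "x = (c,d)" "c < d" "d < n" "f d < f c" "q (f c)" "q (f d)"
          by (auto simp: C_def INV_def)
        have c: "gi c < n" "g (gi c) = c" and d: "gi d < n" "g (gi d) = d" using gi cd by auto
        have "gi c \<noteq> gi d" using c(2) d(2) cd(2) by (metis less_irrefl)
        show "x \<in> h ` J"
        proof (cases "gi c < gi d")
          case True
          then have "(gi c, gi d) \<in> J" using c d cd by (auto simp: J_def)
          moreover have "h (gi c, gi d) = x" using c d cd by (simp add: h_def)
          ultimately show ?thesis by force
        next
          case False
          then have "gi d < gi c" using \<open>gi c \<noteq> gi d\<close> by simp
          then have "(gi d, gi c) \<in> J" using c d cd by (auto simp: J_def)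
          moreover have "h (gi d, gi c) = x" using c d cd by (simp add: h_def)
          ultimately show ?thesis by force
        qed
      qed
    qed
    then show ?thesis by (rule bij_betw_same_card)
  qed
  show ?thesis using cA cJ unfolding A_def[symmetric] B_def[symmetric] C_def[symmetric] by presburger
qed

lemma neg1_parity:
  assumes "even (A + B + C)"
  shows "(-1::rat) ^ A = (-1) ^ B * (-1) ^ C"
proof -
  have "(-1::rat) ^ A = (-1) ^ (B + C)"
    using assms by (cases "even B"; cases "even C") (auto simp: minus_one_power_iff)
  then show ?thesis by (simp add: power_add)
qed

lemma perm_list_length: "distinct \<pi> \<Longrightarrow> set \<pi> = {0..<n} \<Longrightarrow> length \<pi> = n"
  by (metis card_atLeastLessThan diff_zero distinct_card)

lemma koszul_comp:
  assumes pi: "distinct \<pi>" "set \<pi> = {0..<n}" and sigma: "distinct \<sigma>" "set \<sigma> = {0..<n}"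
    and ps: "length ps = n"
  shows "koszul ps (map ((!) \<pi>) \<sigma>) = koszul ps \<pi> * koszul (map ((!) ps) \<pi>) \<sigma>"
proof -
  have lp: "length \<pi> = n" and ls: "length \<sigma> = n" using pi sigma perm_list_length by auto
  have g: "bij_betw ((!) \<sigma>) {..<n} {..<n}"
    using bij_betw_nth[OF sigma(1)] ls sigma(2) by (simp add: atLeast0LessThan)
  have f: "inj_on ((!) \<pi>) {..<n}" using inj_on_nth[OF pi(1)] lp by simp
  have sl: "\<sigma> ! a < n" if "a < n" for a using sigma(2) ls that nth_mem by fastforce
  have e1: "INV (length (map ((!) \<pi>) \<sigma>)) ((!) (map ((!) \<pi>) \<sigma>)) ((!) ps) = INV n ((!) \<pi> \<circ> (!) \<sigma>) ((!) ps)"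
    unfolding length_map ls by (rule INV_cong) (use ls in auto)
  have e2: "INV (length \<sigma>) ((!) \<sigma>) ((!) (map ((!) ps) \<pi>)) = INV n ((!) \<sigma>) ((!) ps \<circ> (!) \<pi>)"
    unfolding ls by (rule INV_cong) (use lp sl in auto)
  show ?thesis
    unfolding koszul_INV e1 e2 lp
    using neg1_parity[OF INV_parity[OF g f]] by (simp add: mult.commute)
qed

abbreviation sng :: "'a \<Rightarrow> rat \<Rightarrow> ('a \<Rightarrow>\<^sub>0 rat)" where "sng \<equiv> Poly_Mapping.single"

definition Bw :: "word \<Rightarrow> nat" where "Bw w = max 1 (length w)"

definition rs :: "nat \<Rightarrow> word \<Rightarrow> rat" where
  "rs k w = koszul (map lp w) (rotate k [0..<length w])"

lemma Bw_pos [simp]: "0 < Bw w" by (simp add: Bw_def)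

lemma Bw_rotate [simp]: "Bw (rotate k w) = Bw w" by (simp add: Bw_def)

lemma rotate_Bw_mod: "rotate (k mod Bw w) w = rotate k w"
  by (cases w) (simp_all add: Bw_def, metis length_Cons rotate_conv_mod)

lemma rotate_mod_len: "length xs = length w \<Longrightarrow> rotate (k mod Bw w) xs = rotate k xs"
  by (cases w) (simp_all add: Bw_def, metis rotate_conv_mod)

lemma rs_mod: "rs (k mod Bw w) w = rs k w"
  unfolding rs_def by (subst rotate_mod_len) auto

lemma koszul_sq: "koszul ps \<pi> * koszul ps \<pi> = 1"
  by (simp add: koszul_def power_add[symmetric])

lemma rs_sq: "rs k w * rs k w = 1" by (simp add: rs_def koszul_sq)

lemma mset_rotate [simp]: "mset (rotate n xs) = mset xs"
proof (induction n)
  case (Suc n)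
  have "mset (rotate1 ys) = mset ys" for ys :: "'a list" by (cases ys) auto
  then show ?case using Suc by (simp add: rotate_Suc)
qed simp

lemma wp_rotate [simp]: "wp (rotate k w) = wp w"
proof -
  have "length (filter lp (rotate k w)) = length (filter lp w)"
    by (metis mset_filter mset_rotate size_mset)
  then show ?thesis by (simp add: wp_def)
qed

lemma map_nth_rotate_upt: "length xs = n \<Longrightarrow> map ((!) xs) (rotate a [0..<n]) = rotate a xs"
  by (metis map_nth rotate_map)

lemma perm_rotate_upt: "distinct (rotate k [0..<n]) \<and> set (rotate k [0..<n]) = {0..<n}"
  by simp

lemma rs_cocycle: "rs a (rotate b w) * rs b w = rs (a + b) w"
proof -
  let ?n = "length w"
  have "koszul (map lp w) (map ((!) (rotate b [0..<?n])) (rotate a [0..<?n]))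
      = koszul (map lp w) (rotate b [0..<?n]) * koszul (map ((!) (map lp w)) (rotate b [0..<?n])) (rotate a [0..<?n])"
    by (rule koszul_comp) auto
  moreover have "map ((!) (rotate b [0..<?n])) (rotate a [0..<?n]) = rotate (a + b) [0..<?n]"
    by (simp add: map_nth_rotate_upt rotate_rotate)
  moreover have "map ((!) (map lp w)) (rotate b [0..<?n]) = map lp (rotate b w)"
    by (simp add: map_nth_rotate_upt rotate_map)
  ultimately show ?thesis by (simp add: rs_def mult.commute)
qed

lemma symC_formula: "symC w = smul (1 / of_nat (Bw w)) (\<Sum>k<Bw w. sng (rotate k w) (rs k w))"
proof (cases "w = []")
  case True then show ?thesis by (simp add: symC_def Bw_def rs_def koszul_def)
next
  case False
  then have "Bw w = length w" by (cases w) (auto simp: Bw_def)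
  then show ?thesis using False by (simp add: symC_def rs_def)
qed

definition KS :: "word list \<Rightarrow> nat list set" where
  "KS ws = {ks. length ks = length ws \<and> (\<forall>t<length ws. ks ! t < Bw (ws ! t))}"
definition rotl :: "nat list \<Rightarrow> word list \<Rightarrow> word list" where
  "rotl ks ws = map (\<lambda>t. rotate (ks ! t) (ws ! t)) [0..<length ws]"
definition rsl :: "nat list \<Rightarrow> word list \<Rightarrow> rat" where
  "rsl ks ws = (\<Prod>t<length ws. rs (ks ! t) (ws ! t))"
definition NB :: "word list \<Rightarrow> nat" where
  "NB ws = (\<Prod>t<length ws. Bw (ws ! t))"

lemma KS_Nil [simp]: "KS [] = {[]}" by (auto simp: KS_def)

lemma KS_Cons: "KS (w # ws) = (\<lambda>(k, ks). k # ks) ` ({..<Bw w} \<times> KS ws)"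
proof (intro set_eqI iffI)
  fix x assume "x \<in> KS (w # ws)"
  then obtain k ks where "x = k # ks" "k < Bw w" "ks \<in> KS ws"
    by (cases x) (auto simp: KS_def All_less_Suc2)
  then show "x \<in> (\<lambda>(k, ks). k # ks) ` ({..<Bw w} \<times> KS ws)" by force
next
  fix x assume "x \<in> (\<lambda>(k, ks). k # ks) ` ({..<Bw w} \<times> KS ws)"
  then show "x \<in> KS (w # ws)" by (auto simp: KS_def All_less_Suc2)
qed

lemma finite_KS [simp]: "finite (KS ws)"
  by (induction ws) (auto simp: KS_Cons)

lemma card_KS: "card (KS ws) = NB ws"
proof (induction ws)
  case Nil then show ?case by (simp add: NB_def)
next
  case (Cons w ws)
  have "inj_on (\<lambda>(k, ks). k # ks) ({..<Bw w} \<times> KS ws)" by (auto simp: inj_on_def)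
  then have "card (KS (w # ws)) = Bw w * card (KS ws)"
    by (simp add: KS_Cons card_image card_cartesian_product)
  then show ?case using Cons by (simp add: NB_def prod.lessThan_Suc_shift del: prod.lessThan_Suc)
qed

lemma rotl_Cons [simp]: "rotl (k # ks) (w # ws) = rotate k w # rotl ks ws"
  by (simp add: rotl_def upt_conv_Cons map_Suc_upt[symmetric] del: upt_Suc)

lemma rotl_Nil [simp]: "rotl ks [] = []" by (simp add: rotl_def)

lemma rsl_Cons [simp]: "rsl (k # ks) (w # ws) = rs k w * rsl ks ws"
  by (simp add: rsl_def prod.lessThan_Suc_shift del: prod.lessThan_Suc)

lemma rsl_Nil [simp]: "rsl ks [] = 1" by (simp add: rsl_def)

lemma cycAll_formula:
  "cycAll ws = smul (1 / of_nat (NB ws)) (\<Sum>ks\<in>KS ws. sng (rotl ks ws) (rsl ks ws))"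
proof (induction ws)
  case Nil then show ?case by (simp add: NB_def)
next
  case (Cons w ws)
  let ?F = "\<lambda>u us. sng (u # us) (1::rat)"
  have inner: "lin (?F u) (cycAll ws) = smul (1 / of_nat (NB ws)) (\<Sum>ks\<in>KS ws. sng (u # rotl ks ws) (rsl ks ws))" for u
    by (simp add: Cons lin_smul lin_sum)
  have "cycAll (w # ws) = lin (\<lambda>u. lin (?F u) (cycAll ws)) (symC w)"
    by (simp add: lin2_eq)
  also have "\<dots> = smul (1 / of_nat (Bw w)) (\<Sum>k<Bw w. smul (rs k w)
       (smul (1 / of_nat (NB ws)) (\<Sum>ks\<in>KS ws. sng (rotate k w # rotl ks ws) (rsl ks ws))))"
    by (simp only: symC_formula inner lin_smul lin_sum lin_single)
  also have "\<dots> = smul (1 / of_nat (Bw w * NB ws)) (\<Sum>k<Bw w. \<Sum>ks\<in>KS ws. sng (rotate k w # rotl ks ws) (rs k w * rsl ks ws))"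
    by (simp add: smul_sum mult.commute)
  also have "(\<Sum>k<Bw w. \<Sum>ks\<in>KS ws. sng (rotate k w # rotl ks ws) (rs k w * rsl ks ws))
      = (\<Sum>ks\<in>KS (w # ws). sng (rotl ks (w # ws)) (rsl ks (w # ws)))"
  proof -
    have inj: "inj_on (\<lambda>(k, ks). k # ks) ({..<Bw w} \<times> KS ws)" by (auto simp: inj_on_def)
    show ?thesis
      unfolding KS_Cons sum.reindex[OF inj] sum.cartesian_product
      by (rule sum.cong) auto
  qed
  also have "Bw w * NB ws = NB (w # ws)" by (simp add: NB_def prod.lessThan_Suc_shift del: prod.lessThan_Suc)
  finally show ?case .
qed

definition PL :: "nat \<Rightarrow> nat list set" where "PL K = {\<pi>. distinct \<pi> \<and> set \<pi> = {0..<K}}"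
definition pm :: "nat list \<Rightarrow> 'a list \<Rightarrow> 'a list" where "pm \<pi> xs = map ((!) xs) \<pi>"

lemma PL_perms: "PL K = permutations_of_set {0..<K}"
  by (auto simp: PL_def permutations_of_set_def)

lemma finite_PL [simp]: "finite (PL K)" by (simp add: PL_perms)
lemma card_PL: "card (PL K) = fact K" by (simp add: PL_perms)
lemma PL_ne: "PL K \<noteq> {}"
proof -
  have "[0..<K] \<in> PL K" by (simp add: PL_def)
  then show ?thesis by blast
qed

lemma PL_len: "\<pi> \<in> PL K \<Longrightarrow> length \<pi> = K"
  by (simp add: PL_def perm_list_length)

lemma PL_nth: "\<pi> \<in> PL K \<Longrightarrow> t < K \<Longrightarrow> \<pi> ! t < K"
  using PL_len[of \<pi> K] nth_mem[of t \<pi>] by (auto simp: PL_def)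

lemma PL_bij: "\<pi> \<in> PL K \<Longrightarrow> bij_betw ((!) \<pi>) {..<K} {..<K}"
  using bij_betw_nth[of \<pi> "{..<K}" "{..<K}"] PL_len[of \<pi> K] by (auto simp: PL_def lessThan_atLeast0)

lemma PL_prod: "\<pi> \<in> PL K \<Longrightarrow> (\<Prod>t<K. f (\<pi> ! t)) = (\<Prod>j<K. f j)"
  using prod.reindex_bij_betw[OF PL_bij] by blast

lemma PL_comp: "\<pi> \<in> PL K \<Longrightarrow> \<pi>' \<in> PL K \<Longrightarrow> map ((!) \<pi>) \<pi>' \<in> PL K"
proof -
  assume p: "\<pi> \<in> PL K" and p': "\<pi>' \<in> PL K"
  have inj: "inj_on ((!) \<pi>) (set \<pi>')" using p p' PL_len[OF p] by (auto simp: PL_def intro!: inj_on_nth)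
  have "distinct (map ((!) \<pi>) \<pi>')" using p' inj by (simp add: distinct_map PL_def)
  moreover have "set (map ((!) \<pi>) \<pi>') = {0..<K}"
    using p p' bij_betw_imp_surj_on[OF PL_bij[OF p]] by (auto simp: PL_def lessThan_atLeast0)
  ultimately show ?thesis by (simp add: PL_def)
qed

lemma length_pm [simp]: "length (pm \<pi> xs) = length \<pi>" by (simp add: pm_def)
lemma nth_pm [simp]: "t < length \<pi> \<Longrightarrow> pm \<pi> xs ! t = xs ! (\<pi> ! t)" by (simp add: pm_def)

lemma length_rotl [simp]: "length (rotl ks ws) = length ws" by (simp add: rotl_def)
lemma nth_rotl [simp]: "t < length ws \<Longrightarrow> rotl ks ws ! t = rotate (ks ! t) (ws ! t)" by (simp add: rotl_def)

lemma NB_pm: "\<pi> \<in> PL (length ws) \<Longrightarrow> NB (pm \<pi> ws) = NB ws"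
  unfolding NB_def using PL_len[of \<pi> "length ws"] PL_prod[of \<pi> "length ws" "\<lambda>j. Bw (ws ! j)"] by simp

lemma rsl_pm: "\<pi> \<in> PL (length ws) \<Longrightarrow> rsl (pm \<pi> ks) (pm \<pi> ws) = rsl ks ws"
  unfolding rsl_def using PL_len[of \<pi> "length ws"] PL_prod[of \<pi> "length ws" "\<lambda>j. rs (ks ! j) (ws ! j)"] by simp

lemma rotl_pm: "\<pi> \<in> PL (length ws) \<Longrightarrow> pm \<pi> (rotl ks ws) = rotl (pm \<pi> ks) (pm \<pi> ws)"
  using PL_len[of \<pi> "length ws"] PL_nth[of \<pi> "length ws"]
  by (intro nth_equalityI) auto

lemma map_wp_rotl [simp]: "map wp (rotl ks ws) = map wp ws"
  by (intro nth_equalityI) auto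

lemma NB_rotl [simp]: "NB (rotl ks ws) = NB ws" by (simp add: NB_def)

lemma KS_pm_bij: "\<pi> \<in> PL (length ws) \<Longrightarrow> bij_betw (pm \<pi>) (KS ws) (KS (pm \<pi> ws))"
proof -
  assume p: "\<pi> \<in> PL (length ws)"
  let ?K = "length ws"
  have len: "length \<pi> = ?K" using PL_len[OF p] .
  have inj: "inj_on (pm \<pi>) (KS ws)"
  proof (rule inj_onI)
    fix x y assume x: "x \<in> KS ws" and y: "y \<in> KS ws" and e: "pm \<pi> x = pm \<pi> y"
    show "x = y"
    proof (rule nth_equalityI)
      show "length x = length y" using x y by (simp add: KS_def)
      fix j assume "j < length x"
      then have j: "j < ?K" using x by (simp add: KS_def)
      then obtain t where t: "t < ?K" "\<pi> ! t = j"
        using bij_betw_imp_surj_on[OF PL_bij[OF p]] by (metis imageE lessThan_iff)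
      have "pm \<pi> x ! t = pm \<pi> y ! t" using e by simp
      then show "x ! j = y ! j" using t len by simp
    qed
  qed
  have sub: "pm \<pi> ` KS ws \<subseteq> KS (pm \<pi> ws)"
    using len PL_nth[OF p] by (auto simp: KS_def)
  have card: "card (KS ws) = card (KS (pm \<pi> ws))" by (simp add: card_KS NB_pm[OF p])
  have "pm \<pi> ` KS ws = KS (pm \<pi> ws)"
    by (rule card_subset_eq) (use sub card card_image[OF inj] in auto)
  then show ?thesis using inj by (simp add: bij_betw_def)
qed

definition GG :: "mono \<Rightarrow> (nat list \<times> nat list) set" where
  "GG m = (case m of (a, ws) \<Rightarrow> Sigma (PL (length ws)) (\<lambda>\<pi>. KS (pm \<pi> ws)))"
definition act :: "nat list \<times> nat list \<Rightarrow> mono \<Rightarrow> mono" where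
  "act g m = (case (g, m) of ((\<pi>, ks), (a, ws)) \<Rightarrow> (a, rotl ks (pm \<pi> ws)))"
definition sgn :: "nat list \<times> nat list \<Rightarrow> mono \<Rightarrow> rat" where
  "sgn g m = (case (g, m) of ((\<pi>, ks), (a, ws)) \<Rightarrow> rsl ks (pm \<pi> ws) * koszul (map wp ws) \<pi>)"

lemma finite_GG [simp]: "finite (GG m)" by (auto simp: GG_def split: prod.splits)

lemma card_GG: "card (GG (a, ws)) = fact (length ws) * NB ws"
proof -
  have "card (GG (a, ws)) = (\<Sum>\<pi>\<in>PL (length ws). card (KS (pm \<pi> ws)))"
    by (simp add: GG_def card_SigmaI)
  also have "\<dots> = (\<Sum>\<pi>\<in>PL (length ws). NB ws)"
    by (rule sum.cong) (auto simp: card_KS NB_pm)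
  finally show ?thesis by (simp add: card_PL)
qed

lemma GG_ne: "GG m \<noteq> {}"
proof -
  obtain a ws where m: "m = (a, ws)" by fastforce
  have "card (GG m) \<noteq> 0"
    unfolding m card_GG using card_KS[of ws] by (simp add: NB_def)
  then show ?thesis by auto
qed

lemma symM_formula:
  "symM m = smul (1 / of_nat (card (GG m))) (\<Sum>g\<in>GG m. sng (act g m) (sgn g m))"
proof -
  obtain a ws where m: "m = (a, ws)" by fastforce
  let ?K = "length ws"
  let ?L = "\<lambda>us. sng (a, us) (1::rat)"
  have S: "lin ?L (symS us) = smul (1 / of_nat (fact (length us)))
      (\<Sum>\<pi>\<in>PL (length us). sng (a, pm \<pi> us) (koszul (map wp us) \<pi>))" for us
    by (simp add: symS_def lin_smul lin_sum PL_def pm_def)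
  have "symM m = lin ?L (lin symS (cycAll ws))" by (simp add: m)
  also have "\<dots> = lin (\<lambda>k. lin ?L (symS k)) (cycAll ws)" by (simp add: lin_lin)
  also have "\<dots> = smul (1 / of_nat (NB ws)) (\<Sum>ks\<in>KS ws. smul (rsl ks ws)
       (smul (1 / of_nat (fact ?K)) (\<Sum>\<pi>\<in>PL ?K. sng (a, pm \<pi> (rotl ks ws)) (koszul (map wp ws) \<pi>))))"
    by (simp add: cycAll_formula lin_smul lin_sum S)
  also have "\<dots> = smul (1 / of_nat (fact ?K * NB ws)) (\<Sum>ks\<in>KS ws. \<Sum>\<pi>\<in>PL ?K.
        sng (a, pm \<pi> (rotl ks ws)) (rsl ks ws * koszul (map wp ws) \<pi>))"
    by (simp add: smul_sum mult.commute)
  also have "(\<Sum>ks\<in>KS ws. \<Sum>\<pi>\<in>PL ?K. sng (a, pm \<pi> (rotl ks ws)) (rsl ks ws * koszul (map wp ws) \<pi>))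
     = (\<Sum>\<pi>\<in>PL ?K. \<Sum>ks\<in>KS ws. sng (a, rotl (pm \<pi> ks) (pm \<pi> ws)) (rsl (pm \<pi> ks) (pm \<pi> ws) * koszul (map wp ws) \<pi>))"
    by (subst sum.swap) (intro sum.cong refl, simp add: rotl_pm rsl_pm)
  also have "\<dots> = (\<Sum>\<pi>\<in>PL ?K. \<Sum>ks'\<in>KS (pm \<pi> ws). sng (a, rotl ks' (pm \<pi> ws)) (rsl ks' (pm \<pi> ws) * koszul (map wp ws) \<pi>))"
    by (intro sum.cong refl sum.reindex_bij_betw KS_pm_bij)
  also have "\<dots> = (\<Sum>g\<in>GG m. sng (act g m) (sgn g m))"
    by (simp add: m GG_def act_def sgn_def sum.Sigma split_def)
  finally show ?thesis by (simp add: m card_GG)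
qed

lemma mod_add_inj:
  fixes x y c B :: nat
  assumes "x < B" "y < B" "(x + c) mod B = (y + c) mod B"
  shows "x = y"
proof -
  have "[x + c = y + c] (mod B)" using assms(3) by (simp add: cong_def)
  then have "[x = y] (mod B)" by (simp add: cong_add_rcancel_nat)
  then show ?thesis using assms(1,2) by (simp add: cong_def)
qed

lemma rsl_sq: "rsl ks ws * rsl ks ws = 1"
  by (simp add: rsl_def prod.distrib[symmetric] rs_sq)

lemma sgn_sq: "sgn g m * sgn g m = 1"
proof -
  obtain \<pi> ks a ws where "g = (\<pi>, ks)" "m = (a, ws)" by fastforce
  then show ?thesis
    using rsl_sq[of ks "pm \<pi> ws"] koszul_sq[of "map wp ws" \<pi>]
    by (simp add: sgn_def algebra_simps)
qed

lemma GG_comp: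
  assumes g: "g \<in> GG m"
  shows "\<exists>\<phi>. bij_betw \<phi> (GG (act g m)) (GG m) \<and>
        (\<forall>h\<in>GG (act g m). act (\<phi> h) m = act h (act g m) \<and> sgn (\<phi> h) m = sgn h (act g m) * sgn g m)"
proof -
  obtain \<pi> ks a ws where gm: "g = (\<pi>, ks)" "m = (a, ws)" by fastforce
  let ?K = "length ws"
  have p: "\<pi> \<in> PL ?K" and ksin: "ks \<in> KS (pm \<pi> ws)" using g by (auto simp: gm GG_def)
  have lp: "length \<pi> = ?K" using PL_len[OF p] .
  have lks: "length ks = ?K" using ksin lp by (simp add: KS_def)
  define vs where "vs = rotl ks (pm \<pi> ws)"
  have lvs: "length vs = ?K" by (simp add: vs_def lp)
  have vsn: "vs ! s = rotate (ks ! s) (ws ! (\<pi> ! s))" if "s < ?K" for s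
    using that lp by (simp add: vs_def)
  have av: "act g m = (a, vs)" by (simp add: gm act_def vs_def)
  define W where "W = (\<lambda>\<pi>' t. ws ! (\<pi> ! (\<pi>' ! t)))"
  define \<phi> where "\<phi> = (\<lambda>(\<pi>'::nat list, ks'::nat list). (map ((!) \<pi>) \<pi>',
      map (\<lambda>t. (ks' ! t + ks ! (\<pi>' ! t)) mod Bw (W \<pi>' t)) [0..<?K]))"
  have GGv: "GG (act g m) = Sigma (PL ?K) (\<lambda>\<pi>'. KS (pm \<pi>' vs))"
    by (simp add: av GG_def lvs)
  have hmem: "\<pi>' \<in> PL ?K \<and> length ks' = ?K \<and> (\<forall>t<?K. ks' ! t < Bw (W \<pi>' t))"
    if "h \<in> GG (act g m)" "h = (\<pi>', ks')" for h \<pi>' ks'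
  proof -
    have p': "\<pi>' \<in> PL ?K" and k': "ks' \<in> KS (pm \<pi>' vs)" using that by (auto simp: GGv)
    have "length \<pi>' = ?K" using PL_len[OF p'] .
    moreover have "\<forall>t<?K. ks' ! t < Bw (W \<pi>' t)"
      using k' PL_nth[OF p'] \<open>length \<pi>' = ?K\<close> by (auto simp: KS_def W_def vsn)
    ultimately show ?thesis using p' k' by (simp add: KS_def)
  qed
  have into: "\<phi> ` GG (act g m) \<subseteq> GG m"
  proof
    fix x assume "x \<in> \<phi> ` GG (act g m)"
    then obtain \<pi>' ks' where h: "(\<pi>', ks') \<in> GG (act g m)" "x = \<phi> (\<pi>', ks')" by auto
    note hm = hmem[OF h(1) refl]
    have c: "map ((!) \<pi>) \<pi>' \<in> PL ?K" using PL_comp[OF p] hm by blast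
    have lp': "length \<pi>' = ?K" using PL_len hm by blast
    show "x \<in> GG m"
      using c lp' PL_nth[OF p] PL_nth[of \<pi>' ?K] hm
      by (auto simp: h(2) \<phi>_def gm GG_def KS_def W_def)
  qed
  have inj: "inj_on \<phi> (GG (act g m))"
  proof (rule inj_onI)
    fix h1 h2 assume h1: "h1 \<in> GG (act g m)" and h2: "h2 \<in> GG (act g m)" and e: "\<phi> h1 = \<phi> h2"
    obtain \<pi>1 ks1 \<pi>2 ks2 where hh: "h1 = (\<pi>1, ks1)" "h2 = (\<pi>2, ks2)" by fastforce
    note m1 = hmem[OF h1 hh(1)] and m2 = hmem[OF h2 hh(2)]
    have e1: "map ((!) \<pi>) \<pi>1 = map ((!) \<pi>) \<pi>2" using e by (simp add: \<phi>_def hh)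
    have "inj_on ((!) \<pi>) {0..<?K}" using p lp by (auto simp: PL_def intro!: inj_on_nth)
    moreover have "set \<pi>1 = {0..<?K}" "set \<pi>2 = {0..<?K}" using m1 m2 by (auto simp: PL_def)
    ultimately have pe: "\<pi>1 = \<pi>2" using e1 inj_on_map_eq_map[of "(!) \<pi>" \<pi>1 \<pi>2] by simp
    have "ks1 = ks2"
    proof (rule nth_equalityI)
      show "length ks1 = length ks2" using m1 m2 by simp
      fix t assume "t < length ks1"
      then have t: "t < ?K" using m1 by simp
      have s1: "snd (\<phi> h1) = map (\<lambda>t. (ks1 ! t + ks ! (\<pi>1 ! t)) mod Bw (W \<pi>1 t)) [0..<?K]"
        by (simp add: \<phi>_def hh)
      have s2: "snd (\<phi> h2) = map (\<lambda>t. (ks2 ! t + ks ! (\<pi>1 ! t)) mod Bw (W \<pi>1 t)) [0..<?K]"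
        by (simp add: \<phi>_def hh pe)
      have "snd (\<phi> h1) ! t = snd (\<phi> h2) ! t" using e by simp
      then have eq: "(ks1 ! t + ks ! (\<pi>1 ! t)) mod Bw (W \<pi>1 t) = (ks2 ! t + ks ! (\<pi>1 ! t)) mod Bw (W \<pi>1 t)"
        unfolding s1 s2 using t by simp
      have b1: "ks1 ! t < Bw (W \<pi>1 t)" using m1 t by blast
      have b2: "ks2 ! t < Bw (W \<pi>1 t)" using m2 t pe by blast
      show "ks1 ! t = ks2 ! t" by (rule mod_add_inj[OF b1 b2 eq])
    qed
    then show "h1 = h2" using pe hh by simp
  qed
  have card: "card (GG (act g m)) = card (GG m)"
    unfolding av using NB_pm[OF p] by (simp add: gm card_GG lvs vs_def lp)
  have bij: "bij_betw \<phi> (GG (act g m)) (GG m)"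
  proof -
    have "\<phi> ` GG (act g m) = GG m"
      by (rule card_subset_eq) (use into card card_image[OF inj] in auto)
    then show ?thesis using inj by (simp add: bij_betw_def)
  qed
  have props: "act (\<phi> h) m = act h (act g m) \<and> sgn (\<phi> h) m = sgn h (act g m) * sgn g m"
    if h: "h \<in> GG (act g m)" for h
  proof -
    obtain \<pi>' ks' where hh: "h = (\<pi>', ks')" by fastforce
    note hm = hmem[OF h hh]
    have p': "\<pi>' \<in> PL ?K" using hm by simp
    have lp': "length \<pi>' = ?K" using PL_len[OF p'] .
    have pn': "\<pi>' ! t < ?K" if "t < ?K" for t using PL_nth[OF p' that] .
    define \<pi>'' where "\<pi>'' = map ((!) \<pi>) \<pi>'"
    define ks'' where "ks'' = map (\<lambda>t. (ks' ! t + ks ! (\<pi>' ! t)) mod Bw (W \<pi>' t)) [0..<?K]"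
    have ph: "\<phi> h = (\<pi>'', ks'')" by (simp add: \<phi>_def hh \<pi>''_def ks''_def)
    have a1: "rotl ks'' (pm \<pi>'' ws) = rotl ks' (pm \<pi>' vs)"
    proof (rule nth_equalityI)
      show "length (rotl ks'' (pm \<pi>'' ws)) = length (rotl ks' (pm \<pi>' vs))"
        by (simp add: \<pi>''_def lp')
      fix t assume "t < length (rotl ks'' (pm \<pi>'' ws))"
      then have t: "t < ?K" by (simp add: \<pi>''_def lp')
      show "rotl ks'' (pm \<pi>'' ws) ! t = rotl ks' (pm \<pi>' vs) ! t"
        using t lp' pn'[OF t]
        by (simp add: \<pi>''_def ks''_def vsn W_def rotate_Bw_mod rotate_rotate)
    qed
    have kz: "koszul (map wp ws) \<pi>'' = koszul (map wp ws) \<pi> * koszul (map wp vs) \<pi>'"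
    proof -
      have "map ((!) (map wp ws)) \<pi> = map wp vs"
        using lp by (intro nth_equalityI) (auto simp: lvs vsn nth_mem PL_nth[OF p])
      then show ?thesis
        unfolding \<pi>''_def
        using koszul_comp[of \<pi> ?K \<pi>' "map wp ws"] p p' by (simp add: PL_def)
    qed
    have rz: "rsl ks'' (pm \<pi>'' ws) = rsl ks' (pm \<pi>' vs) * rsl ks (pm \<pi> ws)"
    proof -
      have "rsl ks'' (pm \<pi>'' ws) = (\<Prod>t<?K. rs (ks' ! t + ks ! (\<pi>' ! t)) (W \<pi>' t))"
        unfolding rsl_def using lp' pn'
        by (intro prod.cong) (simp_all add: \<pi>''_def ks''_def W_def rs_mod)
      also have "\<dots> = (\<Prod>t<?K. rs (ks' ! t) (rotate (ks ! (\<pi>' ! t)) (W \<pi>' t)) * rs (ks ! (\<pi>' ! t)) (W \<pi>' t))"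
        by (simp add: rs_cocycle)
      also have "\<dots> = (\<Prod>t<?K. rs (ks' ! t) (rotate (ks ! (\<pi>' ! t)) (W \<pi>' t))) * (\<Prod>t<?K. rs (ks ! (\<pi>' ! t)) (W \<pi>' t))"
        by (simp add: prod.distrib)
      also have "(\<Prod>t<?K. rs (ks' ! t) (rotate (ks ! (\<pi>' ! t)) (W \<pi>' t))) = rsl ks' (pm \<pi>' vs)"
        unfolding rsl_def using lp' pn' by (intro prod.cong) (simp_all add: vsn W_def)
      also have "(\<Prod>t<?K. rs (ks ! (\<pi>' ! t)) (W \<pi>' t)) = (\<Prod>s<?K. rs (ks ! s) (ws ! (\<pi> ! s)))"
        unfolding W_def by (rule PL_prod[OF p', of "\<lambda>s. rs (ks ! s) (ws ! (\<pi> ! s))"])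
      also have "\<dots> = rsl ks (pm \<pi> ws)" unfolding rsl_def using lp by simp
      finally show ?thesis .
    qed
    have y1: "act (\<phi> h) m = (a, rotl ks'' (pm \<pi>'' ws))" unfolding ph gm by (simp add: act_def)
    have y2: "act h (act g m) = (a, rotl ks' (pm \<pi>' vs))" unfolding hh av by (simp add: act_def)
    have x1: "act (\<phi> h) m = act h (act g m)" unfolding y1 y2 a1 ..
    have x2: "sgn (\<phi> h) m = rsl ks'' (pm \<pi>'' ws) * koszul (map wp ws) \<pi>''"
      unfolding ph gm by (simp add: sgn_def)
    have x3: "sgn h (act g m) * sgn g m = (rsl ks' (pm \<pi>' vs) * koszul (map wp vs) \<pi>') * (rsl ks (pm \<pi> ws) * koszul (map wp ws) \<pi>)"
      unfolding hh av unfolding gm by (simp add: sgn_def)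
    show ?thesis
      unfolding x2 x3 rz kz using x1 by (simp add: ac_simps)
  qed
  show ?thesis using bij props by blast
qed

lemma symM_idem: "lin symM (symM m) = symM m"
  by (rule avg_idem[where G = GG and act = act and sg = sgn])
     (auto simp: symM_formula GG_ne sgn_sq intro: GG_comp)

lemma Sym_idem: "Sym (Sym x) = Sym x"
  by (simp add: Sym_def lin_lin symM_idem)

definition LS :: "word list \<Rightarrow> letter set" where "LS ws = (\<Union>w\<in>set ws. set w)"
definition Qm :: "mono \<Rightarrow> bool" where "Qm m = (\<exists>w\<in>set (snd m). w \<noteq> [])"
definition OkL :: "nat \<Rightarrow> mono \<Rightarrow> bool" where "OkL n m = (\<forall>c\<in>LS (snd m). lidx c < n)"

lemma mset_pm: "\<pi> \<in> PL (length xs) \<Longrightarrow> mset (pm \<pi> xs) = mset xs"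
proof -
  assume p: "\<pi> \<in> PL (length xs)"
  have "mset \<pi> = mset [0..<length xs]"
    using p mset_set_set[of \<pi>] by (simp add: PL_def)
  then have "mset (pm \<pi> xs) = mset (map ((!) xs) [0..<length xs])"
    by (simp add: pm_def)
  then show ?thesis by (simp add: map_nth)
qed

lemma act_fst: "g \<in> GG (a, ws) \<Longrightarrow> fst (act g (a, ws)) = a"
  by (auto simp: act_def split: prod.splits)

lemma act_mset: "g \<in> GG (a, ws) \<Longrightarrow> mset (map length (snd (act g (a, ws)))) = mset (map length ws)"
proof -
  assume g: "g \<in> GG (a, ws)"
  obtain \<pi> ks where gg: "g = (\<pi>, ks)" by fastforce
  have p: "\<pi> \<in> PL (length ws)" using g by (simp add: gg GG_def)
  have "map length (rotl ks (pm \<pi> ws)) = pm \<pi> (map length ws)"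
    using PL_len[OF p] PL_nth[OF p] by (intro nth_equalityI) auto
  then show ?thesis using mset_pm[of \<pi> "map length ws"] p by (simp add: gg act_def)
qed

lemma act_LS: "g \<in> GG (a, ws) \<Longrightarrow> LS (snd (act g (a, ws))) = LS ws"
proof -
  assume g: "g \<in> GG (a, ws)"
  obtain \<pi> ks where gg: "g = (\<pi>, ks)" by fastforce
  have p: "\<pi> \<in> PL (length ws)" using g by (simp add: gg GG_def)
  have "map set (rotl ks (pm \<pi> ws)) = map set (pm \<pi> ws)"
    using PL_len[OF p] by (intro nth_equalityI) auto
  from arg_cong[where f=set, OF this]
  have "set ` set (rotl ks (pm \<pi> ws)) = set ` set (pm \<pi> ws)" by simp
  moreover have "set (pm \<pi> ws) = set ws" using arg_cong[where f=set_mset, OF mset_pm[OF p]] by simp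
  ultimately show ?thesis by (simp add: gg act_def LS_def)
qed

lemma Qm_mset: "Qm (a, ws) = (\<exists>l\<in>#mset (map length ws). l \<noteq> 0)"
  by (auto simp: Qm_def)

lemma len_filter_mset: "length (filter (\<lambda>w. w \<noteq> []) ws) = size (filter_mset (\<lambda>l. l \<noteq> 0) (mset (map length ws)))"
  by (induction ws) auto

lemma allowedM_mset:
  "allowedM (a, ws) = (let M = mset (map length ws); N = size (filter_mset (\<lambda>l. l \<noteq> 0) M) in
      (N = 1 \<and> ((\<exists>l\<in>#M. 2 \<le> l) \<or> 1 \<le> a + (size M - N))) \<or> 2 \<le> N)"
proof -
  have hd: "(2 \<le> length (hd (filter (\<lambda>w. w \<noteq> []) ws))) = (\<exists>l\<in>#mset (map length ws). 2 \<le> l)"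
    if len1: "length (filter (\<lambda>w. w \<noteq> []) ws) = 1"
  proof -
    obtain w0 where w0: "filter (\<lambda>w. w \<noteq> []) ws = [w0]" using len1 by (auto simp: length_Suc_conv)
    have "w0 \<in> set (filter (\<lambda>w. w \<noteq> []) ws)" using w0 by simp
    then have "w0 \<in> set ws" by simp
    moreover have "w = w0" if "w \<in> set ws" "2 \<le> length w" for w
    proof -
      have "w \<in> set (filter (\<lambda>w. w \<noteq> []) ws)" using that by auto
      then show ?thesis using w0 by simp
    qed
    ultimately show ?thesis using w0 by auto
  qed
  show ?thesis
    unfolding allowedM_def Let_def using hd by (auto simp: len_filter_mset)
qed

lemma act_inv:
  assumes "g \<in> GG m"
  shows "Qm (act g m) = Qm m" "LS (snd (act g m)) = LS (snd m)" "allowedM (act g m) = allowedM m"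
proof -
  obtain a ws where m: "m = (a, ws)" by fastforce
  define ws' where "ws' = snd (act g m)"
  have a: "act g m = (a, ws')" using act_fst[of g a ws] assms m unfolding ws'_def by (cases "act g m") simp
  have ms: "mset (map length ws') = mset (map length ws)" using act_mset[of g a ws] assms a m by simp
  show "Qm (act g m) = Qm m" unfolding a unfolding m Qm_mset ms ..
  show "LS (snd (act g m)) = LS (snd m)" using act_LS[of g a ws] assms m by simp
  show "allowedM (act g m) = allowedM m" unfolding a unfolding m allowedM_mset ms ..
qed

lemma keys_symM: "k \<in> Poly_Mapping.keys (symM m) \<Longrightarrow> \<exists>g\<in>GG m. k = act g m"
proof -
  assume k: "k \<in> Poly_Mapping.keys (symM m)"
  have "Poly_Mapping.keys (symM m) \<subseteq> (\<Union>g\<in>GG m. Poly_Mapping.keys (sng (act g m) (sgn g m)))"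
    unfolding symM_formula by (rule order_trans[OF keys_smul keys_sum])
  then show ?thesis using k by (auto split: if_splits)
qed

lemma keys_Sym: "k \<in> Poly_Mapping.keys (Sym x) \<Longrightarrow> \<exists>m\<in>Poly_Mapping.keys x. \<exists>g\<in>GG m. k = act g m"
  unfolding Sym_def using keys_lin keys_symM by fastforce

lemma prjL_lin: "prjL x = lin (\<lambda>m. if Qm m then sng m 1 else 0) x"
  unfolding prjL_def Qm_def by (rule lin_cong) (auto split: prod.splits)

lemma lookup_prjL: "Poly_Mapping.lookup (prjL x) k = (if Qm k then Poly_Mapping.lookup x k else 0)"
proof -
  have "Poly_Mapping.lookup (prjL x) k = (\<Sum>k'\<in>Poly_Mapping.keys x. Poly_Mapping.lookup x k' *
      Poly_Mapping.lookup (if Qm k' then sng k' 1 else 0) k)"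
    unfolding prjL_lin lookup_lin ..
  also have "\<dots> = (\<Sum>k'\<in>Poly_Mapping.keys x. if k' = k \<and> Qm k then Poly_Mapping.lookup x k' else 0)"
    by (rule sum.cong) (auto simp: lookup_single when_def)
  also have "\<dots> = (if Qm k then Poly_Mapping.lookup x k else 0)"
    by (auto simp: sum.delta in_keys_iff)
  finally show ?thesis .
qed

lemma keys_prjL: "Poly_Mapping.keys (prjL x) = {k\<in>Poly_Mapping.keys x. Qm k}"
  by (auto simp: in_keys_iff lookup_prjL split: if_splits)

lemma prjL_symM: "prjL (symM m) = (if Qm m then symM m else 0)"
proof (rule poly_mapping_eqI)
  fix k
  show "Poly_Mapping.lookup (prjL (symM m)) k = Poly_Mapping.lookup (if Qm m then symM m else 0) k"
  proof (cases "k \<in> Poly_Mapping.keys (symM m)")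
    case True
    then obtain g where "g \<in> GG m" "k = act g m" using keys_symM by blast
    then have "Qm k = Qm m" using act_inv by blast
    then show ?thesis by (simp add: lookup_prjL)
  next
    case False
    then show ?thesis by (simp add: lookup_prjL in_keys_iff)
  qed
qed

lemma Sym_prjL: "Sym (prjL x) = prjL (Sym x)"
proof -
  let ?R = "\<lambda>m. if Qm m then sng m (1::rat) else 0"
  have "prjL (Sym x) = lin ?R (lin symM x)" by (simp only: Sym_def prjL_lin)
  also have "\<dots> = lin (\<lambda>k. lin ?R (symM k)) x" by (rule lin_lin)
  also have "\<dots> = lin (\<lambda>k. if Qm k then symM k else 0) x"
  proof (rule lin_cong)
    fix k
    have "lin ?R (symM k) = prjL (symM k)" by (simp only: prjL_lin)
    then show "lin ?R (symM k) = (if Qm k then symM k else 0)" by (simp only: prjL_symM)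
  qed
  finally have 1: "prjL (Sym x) = lin (\<lambda>k. if Qm k then symM k else 0) x" .
  have "Sym (prjL x) = lin symM (lin ?R x)" by (simp only: Sym_def prjL_lin)
  also have "\<dots> = lin (\<lambda>k. lin symM (?R k)) x" by (rule lin_lin)
  also have "\<dots> = lin (\<lambda>k. if Qm k then symM k else 0) x"
    by (rule lin_cong) simp
  finally show ?thesis using 1 by simp
qed

lemma Lam_prjL_Sym:
  assumes ok: "\<And>m. m \<in> Poly_Mapping.keys w \<Longrightarrow> OkL n m"
    and al: "\<And>m. m \<in> Poly_Mapping.keys w \<Longrightarrow> Qm m \<Longrightarrow> allowedM m"
  shows "Lam n (prjL (Sym w))"
proof -
  have sym: "Sym (prjL (Sym w)) = prjL (Sym w)" by (simp add: Sym_prjL Sym_idem)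
  have kk: "\<exists>m\<in>Poly_Mapping.keys w. \<exists>g\<in>GG m. k = act g m \<and> Qm m"
    if "k \<in> Poly_Mapping.keys (prjL (Sym w))" for k
  proof -
    from that have k: "k \<in> Poly_Mapping.keys (Sym w)" "Qm k" by (auto simp: keys_prjL)
    then obtain m g where "m \<in> Poly_Mapping.keys w" "g \<in> GG m" "k = act g m" using keys_Sym by blast
    then show ?thesis using k act_inv by blast
  qed
  have lett: "\<forall>(a, ws)\<in>Poly_Mapping.keys (prjL (Sym w)). \<forall>w\<in>set ws. \<forall>c\<in>set w. lidx c < n"
  proof (intro ballI, clarify)
    fix a ws v c assume k: "(a, ws) \<in> Poly_Mapping.keys (prjL (Sym w))" and v: "v \<in> set ws" "c \<in> set v"
    obtain m g where mg: "m \<in> Poly_Mapping.keys w" "g \<in> GG m" "(a, ws) = act g m" using kk[OF k] by blast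
    have "c \<in> LS (snd (act g m))" using v mg(3)[symmetric] by (auto simp: LS_def)
    then have "c \<in> LS (snd m)" using act_inv(2)[OF mg(2)] by simp
    then show "lidx c < n" using ok[OF mg(1)] by (simp add: OkL_def)
  qed
  have allow: "\<forall>k\<in>Poly_Mapping.keys (prjL (Sym w)). allowedM k"
  proof
    fix k assume "k \<in> Poly_Mapping.keys (prjL (Sym w))"
    then obtain m g where "m \<in> Poly_Mapping.keys w" "g \<in> GG m" "k = act g m" "Qm m" using kk by blast
    then show "allowedM k" using al act_inv(3) by blast
  qed
  show ?thesis using sym lett allow by (simp add: Lam_def inL_def)
qed

lemma keys_sumD: "k \<in> Poly_Mapping.keys (sum F I) \<Longrightarrow> \<exists>i\<in>I. k \<in> Poly_Mapping.keys (F i)"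
  using keys_sum[of F I] by blast

lemma keys_singleD: "k \<in> Poly_Mapping.keys (sng a c) \<Longrightarrow> k = a"
  by (simp split: if_splits)

lemma keys_linD: "k \<in> Poly_Mapping.keys (lin f x) \<Longrightarrow> \<exists>u\<in>Poly_Mapping.keys x. k \<in> Poly_Mapping.keys (f u)"
  using keys_lin[of f x] by blast

lemma keys_addD: "k \<in> Poly_Mapping.keys (a + b) \<Longrightarrow> k \<in> Poly_Mapping.keys a \<or> k \<in> Poly_Mapping.keys b"
  using keys_add[of a b] by blast

lemma keys_sum2_single:
  "k \<in> Poly_Mapping.keys (\<Sum>i\<in>I. \<Sum>j\<in>J i. sng (f i j) (c i j)) \<Longrightarrow> \<exists>i\<in>I. \<exists>j\<in>J i. k = f i j"
proof -
  assume "k \<in> Poly_Mapping.keys (\<Sum>i\<in>I. \<Sum>j\<in>J i. sng (f i j) (c i j))"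
  from keys_sumD[OF this] obtain i where i: "i \<in> I" "k \<in> Poly_Mapping.keys (\<Sum>j\<in>J i. sng (f i j) (c i j))" ..
  from keys_sumD[OF i(2)] obtain j where j: "j \<in> J i" "k \<in> Poly_Mapping.keys (sng (f i j) (c i j))" ..
  show ?thesis using i(1) j(1) keys_singleD[OF j(2)] by blast
qed

lemma keys_sum2_lin:
  "k \<in> Poly_Mapping.keys (\<Sum>i\<in>I. \<Sum>j\<in>J i. lin (\<lambda>u. sng (f i j u) (c i j u)) (B i j))
   \<Longrightarrow> \<exists>i\<in>I. \<exists>j\<in>J i. \<exists>u\<in>Poly_Mapping.keys (B i j). k = f i j u"
proof -
  assume "k \<in> Poly_Mapping.keys (\<Sum>i\<in>I. \<Sum>j\<in>J i. lin (\<lambda>u. sng (f i j u) (c i j u)) (B i j))"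
  from keys_sumD[OF this] obtain i where i: "i \<in> I" "k \<in> Poly_Mapping.keys (\<Sum>j\<in>J i. lin (\<lambda>u. sng (f i j u) (c i j u)) (B i j))" ..
  from keys_sumD[OF i(2)] obtain j where j: "j \<in> J i" "k \<in> Poly_Mapping.keys (lin (\<lambda>u. sng (f i j u) (c i j u)) (B i j))" ..
  from keys_linD[OF j(2)] obtain u where u: "u \<in> Poly_Mapping.keys (B i j)" "k \<in> Poly_Mapping.keys (sng (f i j u) (c i j u))" ..
  show ?thesis using i(1) j(1) u(1) keys_singleD[OF u(2)] by blast
qed

lemma keys_sum1_lin:
  "k \<in> Poly_Mapping.keys (\<Sum>i\<in>I. lin (\<lambda>u. sng (f i u) (c i u)) (B i))
   \<Longrightarrow> \<exists>i\<in>I. \<exists>u\<in>Poly_Mapping.keys (B i). k = f i u"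
proof -
  assume "k \<in> Poly_Mapping.keys (\<Sum>i\<in>I. lin (\<lambda>u. sng (f i u) (c i u)) (B i))"
  from keys_sumD[OF this] obtain i where i: "i \<in> I" "k \<in> Poly_Mapping.keys (lin (\<lambda>u. sng (f i u) (c i u)) (B i))" ..
  from keys_linD[OF i(2)] obtain u where u: "u \<in> Poly_Mapping.keys (B i)" "k \<in> Poly_Mapping.keys (sng (f i u) (c i u))" ..
  show ?thesis using i(1) u(1) keys_singleD[OF u(2)] by blast
qed

lemma keys_brw:
  assumes "u \<in> Poly_Mapping.keys (brw x y)"
  shows "\<exists>i<length x. \<exists>j<length y. u = drop (Suc i) x @ take i x @ drop (Suc j) y @ take j y"
  using keys_sum2_single[OF assms[unfolded brw_def Let_def]] by auto

lemma keys_brw_len: "u \<in> Poly_Mapping.keys (brw x y) \<Longrightarrow> length u = length x + length y - 2 \<and> x \<noteq> [] \<and> y \<noteq> []"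
  by (drule keys_brw) auto

lemma keys_brw_set: "u \<in> Poly_Mapping.keys (brw x y) \<Longrightarrow> set u \<subseteq> set x \<union> set y"
  by (drule keys_brw) (auto dest!: set_take_subset[THEN subsetD] set_drop_subset[THEN subsetD])

lemma keys_cobw:
  assumes "us \<in> Poly_Mapping.keys (cobw w)"
  shows "length us = 2 \<and> (\<forall>v\<in>set us. set v \<subseteq> set w)"
  using keys_sum2_single[OF assms[unfolded cobw_def Let_def]]
  by (auto dest!: set_take_subset[THEN subsetD] set_drop_subset[THEN subsetD])

lemma set_rm_idx: "set (rm_idx S xs) \<subseteq> set xs"
  by (auto simp: rm_idx_def)

lemma length_rm_idx1: "i < length xs \<Longrightarrow> length (rm_idx {i} xs) = length xs - 1"
proof -
  assume i: "i < length xs"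
  have d: "distinct (filter (\<lambda>t. t \<notin> {i}) [0..<length xs])" by simp
  have "length (rm_idx {i} xs) = length (filter (\<lambda>t. t \<notin> {i}) [0..<length xs])"
    by (simp add: rm_idx_def)
  also have "\<dots> = card (set (filter (\<lambda>t. t \<notin> {i}) [0..<length xs]))"
    by (rule distinct_card[OF d, symmetric])
  also have "set (filter (\<lambda>t. t \<notin> {i}) [0..<length xs]) = {..<length xs} - {i}" by auto
  finally show ?thesis using i by simp
qed

lemma LS_Cons: "LS (w # ws) = set w \<union> LS ws" by (simp add: LS_def)
lemma LS_append: "LS (xs @ ys) = LS xs \<union> LS ys" by (simp add: LS_def)
lemma LS_rm: "LS (rm_idx S xs) \<subseteq> LS xs" using set_rm_idx by (fastforce simp: LS_def)
lemma LS_nth: "i < length xs \<Longrightarrow> set (xs ! i) \<subseteq> LS xs" by (auto simp: LS_def intro!: bexI[of _ "xs ! i"])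

lemma not_allowed:
  assumes q: "Qm (c, ws)" and na: "\<not> allowedM (c, ws)"
  shows "c = 0 \<and> (\<exists>w. ws = [w] \<and> w \<noteq> [] \<and> length w < 2)"
proof -
  let ?F = "filter (\<lambda>w. w \<noteq> []) ws"
  have "?F \<noteq> []" using q by (auto simp: Qm_def filter_empty_conv)
  then have F1: "length ?F \<ge> 1" by (cases ?F) auto
  have F2: "\<not> 2 \<le> length ?F" using na by (simp add: allowedM_def Let_def)
  have F: "length ?F = 1" using F1 F2 by simp
  have lF: "length ?F \<le> length ws" by simp
  have c: "c + (length ws - 1) = 0" and h: "\<not> 2 \<le> length (hd ?F)"
    using na F lF unfolding allowedM_def Let_def by auto
  have lw: "length ws = 1" using c F lF by simp
  then obtain w where w: "ws = [w]" by (auto simp: length_Suc_conv)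
  have "w \<noteq> []" using \<open>?F \<noteq> []\<close> w by (auto split: if_splits)
  then show ?thesis using c h w by simp
qed

lemma allowed_single: "allowedM (0, [x]) \<Longrightarrow> x \<noteq> [] \<Longrightarrow> 2 \<le> length x"
  by (simp add: allowedM_def)

lemma brm_keys:
  assumes "m \<in> Poly_Mapping.keys (brm (a, gs) (b, hs))"
  shows "\<exists>i<length gs. \<exists>j<length hs. \<exists>u\<in>Poly_Mapping.keys (brw (gs ! i) (hs ! j)).
           m = (a + b, u # rm_idx {i} gs @ rm_idx {j} hs)"
  using keys_sum2_lin[OF assms[unfolded brm.simps Let_def]] by auto

lemma deltam_keys:
  assumes "m \<in> Poly_Mapping.keys (deltam (a, gs))"
  shows "\<exists>j<length gs. \<exists>i<j. \<exists>u\<in>Poly_Mapping.keys (brw (gs ! i) (gs ! j)).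
           m = (Suc a, u # rm_idx {i, j} gs)"
  using keys_sum2_lin[OF assms[unfolded deltam.simps Let_def]] by auto

lemma cobm_keys:
  assumes "m \<in> Poly_Mapping.keys (cobm (a, gs))"
  shows "\<exists>i<length gs. \<exists>us\<in>Poly_Mapping.keys (cobw (gs ! i)). m = (a, us @ rm_idx {i} gs)"
  using keys_sum1_lin[OF assms[unfolded cobm.simps Let_def]] by auto

lemma brm_ok:
  assumes m: "m \<in> Poly_Mapping.keys (brm m1 m2)" and o1: "OkL n m1" and o2: "OkL n m2"
  shows "OkL n m"
proof -
  obtain a gs b hs where mm: "m1 = (a, gs)" "m2 = (b, hs)" by fastforce
  obtain i j u where ij: "i < length gs" "j < length hs" "u \<in> Poly_Mapping.keys (brw (gs ! i) (hs ! j))"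
    and me: "m = (a + b, u # rm_idx {i} gs @ rm_idx {j} hs)"
    using brm_keys[OF m[unfolded mm]] by blast
  have "LS (snd m) \<subseteq> LS gs \<union> LS hs"
    using keys_brw_set[OF ij(3)] LS_nth[OF ij(1)] LS_nth[OF ij(2)] LS_rm[of "{i}" gs] LS_rm[of "{j}" hs]
    by (auto simp: me LS_Cons LS_append)
  then show ?thesis using o1 o2 by (auto simp: OkL_def mm)
qed

lemma brm_allowed:
  assumes m: "m \<in> Poly_Mapping.keys (brm m1 m2)" and a1: "allowedM m1" and a2: "allowedM m2"
    and q: "Qm m"
  shows "allowedM m"
proof (rule ccontr)
  assume na: "\<not> allowedM m"
  obtain a gs b hs where mm: "m1 = (a, gs)" "m2 = (b, hs)" by fastforce
  obtain i j u where ij: "i < length gs" "j < length hs" "u \<in> Poly_Mapping.keys (brw (gs ! i) (hs ! j))"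
    and me: "m = (a + b, u # rm_idx {i} gs @ rm_idx {j} hs)"
    using brm_keys[OF m[unfolded mm]] by blast
  from not_allowed[OF q[unfolded me] na[unfolded me]]
  obtain w where ab: "a + b = 0" and w: "u # rm_idx {i} gs @ rm_idx {j} hs = [w]" "length w < 2" by blast
  have "length (rm_idx {i} gs) = 0" "length (rm_idx {j} hs) = 0" using w(1) by auto
  then have lg: "length gs = 1" and lh: "length hs = 1"
    using length_rm_idx1[OF ij(1)] length_rm_idx1[OF ij(2)] ij(1,2) by auto
  then have gs: "gs = [gs ! 0]" and hs: "hs = [hs ! 0]" and i0: "i = 0" and j0: "j = 0"
    using ij(1,2) by (auto simp: length_Suc_conv)
  have lu: "length u = length (gs ! i) + length (hs ! j) - 2" and ne: "gs ! i \<noteq> []" "hs ! j \<noteq> []"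
    using keys_brw_len[OF ij(3)] by auto
  have "allowedM (0, [gs ! 0])" using a1 ab mm(1) gs by (metis add_is_0)
  then have "2 \<le> length (gs ! 0)" using ne i0 by (intro allowed_single) auto
  moreover have "allowedM (0, [hs ! 0])" using a2 ab mm(2) hs by (metis add_is_0)
  then have "2 \<le> length (hs ! 0)" using ne j0 by (intro allowed_single) auto
  ultimately have "2 \<le> length u" using lu i0 j0 by simp
  then show False using w by simp
qed

lemma deltam_ok:
  assumes m: "m \<in> Poly_Mapping.keys (deltam m1)" and o1: "OkL n m1"
  shows "OkL n m \<and> (Qm m \<longrightarrow> allowedM m)"
proof -
  obtain a gs where mm: "m1 = (a, gs)" by fastforce
  obtain i j u where ij: "j < length gs" "i < j" "u \<in> Poly_Mapping.keys (brw (gs ! i) (gs ! j))"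
    and me: "m = (Suc a, u # rm_idx {i, j} gs)"
    using deltam_keys[OF m[unfolded mm]] by blast
  have "LS (snd m) \<subseteq> LS gs"
    using keys_brw_set[OF ij(3)] LS_nth[of i gs] LS_nth[OF ij(1)] LS_rm[of "{i, j}" gs] ij
    by (auto simp: me LS_Cons)
  then have "OkL n m" using o1 by (auto simp: OkL_def mm)
  moreover have "Qm m \<longrightarrow> allowedM m" using not_allowed me by blast
  ultimately show ?thesis by blast
qed

lemma cobm_ok:
  assumes m: "m \<in> Poly_Mapping.keys (cobm m1)" and o1: "OkL n m1"
  shows "OkL n m \<and> (Qm m \<longrightarrow> allowedM m)"
proof -
  obtain a gs where mm: "m1 = (a, gs)" by fastforce
  obtain i us where ij: "i < length gs" "us \<in> Poly_Mapping.keys (cobw (gs ! i))"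
    and me: "m = (a, us @ rm_idx {i} gs)"
    using cobm_keys[OF m[unfolded mm]] by blast
  have us: "length us = 2" "\<forall>v\<in>set us. set v \<subseteq> set (gs ! i)" using keys_cobw[OF ij(2)] by auto
  have "LS us \<subseteq> LS gs" using us(2) LS_nth[OF ij(1)] by (auto simp: LS_def)
  then have "LS (snd m) \<subseteq> LS gs"
    using LS_rm[of "{i}" gs] by (auto simp: me LS_append)
  then have "OkL n m" using o1 by (auto simp: OkL_def mm)
  moreover have "Qm m \<longrightarrow> allowedM m"
  proof
    assume "Qm m"
    show "allowedM m"
    proof (rule ccontr)
      assume "\<not> allowedM m"
      from not_allowed[OF \<open>Qm m\<close>[unfolded me] this[unfolded me]]
      obtain w where "us @ rm_idx {i} gs = [w]" by blast
      then show False using us(1) by (metis length_append length_Cons list.size(3) add_is_1 numeral_2_eq_2 nat.simps(3) le_add1 not_less_eq_eq One_nat_def)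
    qed
  qed
  ultimately show ?thesis by blast
qed

theorem theorem3p5:
  fixes n :: nat and x y :: "mono \<Rightarrow>\<^sub>0 rat"
  assumes "Lam n x" and "Lam n y"
  shows "Lam n (prjL (brl x y)) \<and> Lam n (prjL (dl x))"
proof -
  have okx: "OkL n m" "allowedM m" if "m \<in> Poly_Mapping.keys x" for m
    using assms(1) that by (auto simp: Lam_def inL_def OkL_def LS_def)
  have oky: "OkL n m" "allowedM m" if "m \<in> Poly_Mapping.keys y" for m
    using assms(2) that by (auto simp: Lam_def inL_def OkL_def LS_def)
  have 1: "Lam n (prjL (brl x y))"
    unfolding brl_def Sym_def[symmetric]
  proof (rule Lam_prjL_Sym)
    fix m assume "m \<in> Poly_Mapping.keys (lin2 brm x y)"
    then obtain m1 m2 where mm: "m1 \<in> Poly_Mapping.keys x" "m2 \<in> Poly_Mapping.keys y"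
      "m \<in> Poly_Mapping.keys (brm m1 m2)"
      unfolding lin2_eq by (blast dest: keys_linD)
    show "OkL n m" using brm_ok[OF mm(3)] okx(1)[OF mm(1)] oky(1)[OF mm(2)] .
    show "Qm m \<Longrightarrow> allowedM m" using brm_allowed[OF mm(3)] okx(2)[OF mm(1)] oky(2)[OF mm(2)] .
  next
  qed
  have 2: "Lam n (prjL (dl x))"
    unfolding dl_def
  proof (rule Lam_prjL_Sym)
    fix m assume "m \<in> Poly_Mapping.keys (lin (\<lambda>m. deltam m + cobm m) x)"
    then obtain m1 where m1: "m1 \<in> Poly_Mapping.keys x"
      "m \<in> Poly_Mapping.keys (deltam m1) \<or> m \<in> Poly_Mapping.keys (cobm m1)"
      by (blast dest: keys_linD keys_addD)
    have "OkL n m \<and> (Qm m \<longrightarrow> allowedM m)"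
      using m1(2) deltam_ok cobm_ok okx(1)[OF m1(1)] by blast
    then show "OkL n m" "Qm m \<Longrightarrow> allowedM m" by auto
  qed
  show ?thesis using 1 2 by blast
qed

end
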